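(* Let $\mathcal{X}$ be a finite set, let $P_X$ be a pmf on $\mathcal{X}$ with $P_X(x)>0$ for all $x$, and let $R_X\neq P_X$ be a pmf on $\mathcal{X}$. Write $J_X=R_X-P_X$ and $K_X(x)=J_X(x)/\sqrt{P_X(x)}$, so that $R_X=P_X+J_X=P_X+\mathrm{diag}(\sqrt{P_X})K_X$. Then $$\frac{D(R_X\|P_X)}{\|K_X\|_2^2\,\|J_X\|_1}\ge \frac{\phi\!\left(\max_{A\subseteq\mathcal{X}}\min\{P_X(A),1-P_X(A)\}\right)}{4\max_{x\in\mathcal{X}}\left|\frac{J_X(x)}{P_X(x)}\right|},$$ where $\phi:[0,\tfrac12]\to\mathbb{R}$ is $\phi(p)=\frac{1}{1-2p}\log\frac{1-p}{p}$ for $p\in[0,\tfrac12)$ and $\phi(\tfrac12)=2$.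
   Context: $D(R_X\|P_X)=\sum_x R_X(x)\log(R_X(x)/P_X(x))$ is the KL divergence (natural log). $P_X(A)=\sum_{x\in A}P_X(x)$. $\|\cdot\|_p$ denotes the $\ell^p$-norm. *)

theory Defs
  imports "HOL-Analysis.Analysis"
begin

definition is_pmf :: "('a::finite \<Rightarrow> real) \<Rightarrow> bool" where
  "is_pmf p \<longleftrightarrow> (\<forall>x. p x \<ge> 0) \<and> (\<Sum>x\<in>UNIV. p x) = 1"

definition KL_div :: "('a::finite \<Rightarrow> real) \<Rightarrow> ('a \<Rightarrow> real) \<Rightarrow> real" where
  "KL_div r p = (\<Sum>x\<in>UNIV. if r x = 0 then 0 else r x * ln (r x / p x))"

definition prob_set :: "('a \<Rightarrow> real) \<Rightarrow> 'a set \<Rightarrow> real" where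
  "prob_set p A = (\<Sum>x\<in>A. p x)"

definition phi :: "real \<Rightarrow> real" where
  "phi p = (if p = 1/2 then 2 else (1 / (1 - 2*p)) * ln ((1 - p) / p))"

end

theory Submission
  imports Defs "HOL-Real_Asymp.Real_Asymp"
begin


lemma ln_upper: fixes x::real assumes "1 \<le> x" shows "ln x \<le> (x - 1/x)/2"
proof -
  have "(\<lambda>t. (t - 1/t)/2 - ln t) 1 \<le> (\<lambda>t. (t - 1/t)/2 - ln t) x"
  proof (rule DERIV_nonneg_imp_increasing_open[OF assms])
    fix t :: real assume t: "1 < t" "t < x"
    have "DERIV (\<lambda>t. (t - 1/t)/2 - ln t) t :> ((1 + 1/t^2)/2 - 1/t)"
      using t by (auto intro!: derivative_eq_intros simp: field_simps power2_eq_square)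
    moreover have "(1 + 1/t^2)/2 - 1/t = (1 - 1/t)^2/2"
      using t by (simp add: field_simps power2_eq_square)
    ultimately show "\<exists>y. DERIV (\<lambda>t. (t - 1/t)/2 - ln t) t :> y \<and> y \<ge> 0" by force
  next
    show "continuous_on {1..x} (\<lambda>t. (t - 1/t)/2 - ln t)"
      by (intro continuous_intros) auto
  qed
  then show ?thesis by simp
qed

lemma ln_lower: fixes x::real assumes "1 \<le> x" shows "2*(x-1)/(x+1) \<le> ln x"
proof -
  have "(\<lambda>t. ln t - 2*(t-1)/(t+1)) 1 \<le> (\<lambda>t. ln t - 2*(t-1)/(t+1)) x"
  proof (rule DERIV_nonneg_imp_increasing_open[OF assms])
    fix t :: real assume t: "1 < t" "t < x"
    have "DERIV (\<lambda>t. ln t - 2*(t-1)/(t+1)) t :> (1/t - 4/(t+1)^2)"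
      using t by (auto intro!: derivative_eq_intros simp: field_simps power2_eq_square)
    moreover have "1/t - 4/(t+1)^2 = (t-1)^2/(t*(t+1)^2)"
    proof -
      have "t+1 \<noteq> 0" "t \<noteq> 0" using t by auto
      then show ?thesis by (simp add: divide_simps) (simp add: algebra_simps power2_eq_square)
    qed
    moreover have "(t-1)^2/(t*(t+1)^2) \<ge> 0" using t by simp
    ultimately show "\<exists>y. DERIV (\<lambda>t. ln t - 2*(t-1)/(t+1)) t :> y \<and> y \<ge> 0" by force
  next
    show "continuous_on {1..x} (\<lambda>t. ln t - 2*(t-1)/(t+1))"
      by (intro continuous_intros) auto
  qed
  then show ?thesis by simp
qed

lemma psi_mono: fixes x y::real assumes "1 < x" "x \<le> y"
  shows "(x+1)*ln x/(x-1) \<le> (y+1)*ln y/(y-1)"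
proof (rule DERIV_nonneg_imp_increasing_open[OF assms(2)])
  fix t :: real assume t: "x < t" "t < y"
  have "DERIV (\<lambda>t. (t+1)*ln t/(t-1)) t :> ((t+1)*(t-1)/t - 2*ln t)/(t-1)^2"
    using t assms by (auto intro!: derivative_eq_intros simp: field_simps power2_eq_square)
  moreover have "((t+1)*(t-1)/t - 2*ln t) \<ge> 0"
    using ln_upper[of t] t assms by (simp add: field_simps)
  ultimately show "\<exists>z. DERIV (\<lambda>t. (t+1)*ln t/(t-1)) t :> z \<and> z \<ge> 0" by force
next
  show "continuous_on {x..y} (\<lambda>t. (t+1)*ln t/(t-1))"
    using assms by (intro continuous_intros) auto
qed

lemma cont_xlnx: "continuous_on {0..} (\<lambda>x::real. x * ln x)"
  unfolding continuous_on_eq_continuous_within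
proof
  fix x :: real assume x: "x \<in> {0..}"
  show "continuous (at x within {0..}) (\<lambda>x. x * ln x)"
  proof (cases "x = 0")
    case True
    have "((\<lambda>x::real. x * ln x) \<longlongrightarrow> 0) (at_right 0)" by real_asymp
    then show ?thesis using True by (simp add: continuous_within at_within_Ici_at_right)
  next
    case False
    then have "isCont (\<lambda>x. x * ln x) x" using x by (auto intro!: continuous_intros)
    then show ?thesis using continuous_at_imp_continuous_at_within by blast
  qed
qed



lemma gp_strict:
  fixes x y c :: real assumes "0 < x" "x < y" "y \<le> 1/2"
  shows "1/y + 1/(1-y) - 2*c < 1/x + 1/(1-x) - 2*c"
proof -
  have e: "1/z + 1/(1-z) = 1/(z*(1-z))" if "0<z" "z<1" for z::real
    using that by (simp add: field_simps)
  have "x*(1-x) < y*(1-y)"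
  proof -
    have "y*(1-y) - x*(1-x) = (y-x)*(1-y-x)" by (simp add: algebra_simps)
    moreover have "(y-x)*(1-y-x) > 0" using assms by simp
    ultimately show ?thesis by simp
  qed
  moreover have "x*(1-x) > 0" using assms by simp
  ultimately have "1/(y*(1-y)) < 1/(x*(1-x))" by (simp add: frac_less2)
  then show ?thesis using e[of x] e[of y] assms by simp
qed

lemma g_sign:
  fixes p c :: real
  assumes p: "0 < p" "p < 1/2" and c: "c = ln ((1-p)/p) / (1-2*p)"
  defines "g \<equiv> \<lambda>q. ln q - ln p - ln (1-q) + ln (1-p) - 2*c*(q-p)"
  shows g_neg: "\<And>q. 0 < q \<Longrightarrow> q \<le> p \<Longrightarrow> g q \<le> 0"
    and g_pos: "\<And>q. p \<le> q \<Longrightarrow> q \<le> 1/2 \<Longrightarrow> g q \<ge> 0"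
proof -
  define g' where "g' = (\<lambda>q::real. 1/q + 1/(1-q) - 2*c)"
  have der: "DERIV g x :> g' x" if "0 < x" "x < 1" for x
    unfolding g_def g'_def using that
    by (auto intro!: derivative_eq_intros simp: field_simps)
  have gp: "g p = 0" unfolding g_def by simp
  have gh: "g (1/2) = 0"
  proof -
    have "ln ((1-p)/p) = ln (1-p) - ln p" using p by (simp add: ln_divide_pos)
    moreover have "2*c*(1/2-p) = ln ((1-p)/p)" using c p by (simp add: field_simps)
    ultimately show ?thesis unfolding g_def by simp
  qed
  obtain \<eta> where eta: "p < \<eta>" "\<eta> < 1/2" "g (1/2) - g p = (1/2 - p) * g' \<eta>"
    using MVT2[of p "1/2" g g'] der p by force
  have geta: "g' \<eta> = 0" using eta gp gh p by simp
  show "g q \<le> 0" if q: "0 < q" "q \<le> p" for q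
  proof (cases "q = p")
    case True then show ?thesis using gp by simp
  next
    case False
    then have "q < p" using q by simp
    then obtain \<xi> where xi: "q < \<xi>" "\<xi> < p" "g p - g q = (p - q) * g' \<xi>"
      using MVT2[of q p g g'] der q p by force
    have "g' \<eta> < g' \<xi>" unfolding g'_def using gp_strict[of \<xi> \<eta> c] xi eta q by simp
    then have "(p - q) * g' \<xi> > 0" using geta \<open>q<p\<close> by simp
    then show ?thesis using xi gp by simp
  qed
  show "g q \<ge> 0" if q: "p \<le> q" "q \<le> 1/2" for q
  proof (cases "q = p \<or> q = 1/2")
    case True
    then have "q = p \<or> q = 1/2" .
    then show ?thesis using gp gh by (metis order_refl)
  next
    case False
    then have qq: "p < q" "q < 1/2" using q by auto
    obtain \<xi>1 where x1: "p < \<xi>1" "\<xi>1 < q" "g q - g p = (q - p) * g' \<xi>1"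
      using MVT2[of p q g g'] der qq p by force
    obtain \<xi>2 where x2: "q < \<xi>2" "\<xi>2 < 1/2" "g (1/2) - g q = (1/2 - q) * g' \<xi>2"
      using MVT2[of q "1/2" g g'] der qq p by force
    have lt: "g' \<xi>2 < g' \<xi>1" unfolding g'_def using gp_strict[of \<xi>1 \<xi>2 c] x1 x2 p by simp
    show ?thesis
    proof (rule ccontr)
      assume "\<not> g q \<ge> 0"
      then have "g q < 0" by simp
      then have "g' \<xi>1 < 0" using x1 gp qq by (simp add: mult_less_0_iff)
      then have "g' \<xi>2 < 0" using lt by simp
      then have "(1/2 - q) * g' \<xi>2 < 0" using qq by (simp add: mult_pos_neg)
      then show False using x2 gh \<open>g q < 0\<close> by simp
    qed
  qed
qed



lemma g_sign_half:
  fixes q :: real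
  defines "g \<equiv> \<lambda>q. ln q - ln (1/2) - ln (1-q) + ln (1-1/2) - 2*2*(q-1/2)"
  assumes "0 < q" "q \<le> 1/2"
  shows "g q \<le> 0"
proof (cases "q = 1/2")
  case True
  then have "q = 1/2" by simp
  moreover have "g (1/2) = 0" unfolding g_def by simp
  ultimately show ?thesis by (metis order_refl)
next
  case False
  then have qq: "q < 1/2" using assms by simp
  define g' where "g' = (\<lambda>q::real. 1/q + 1/(1-q) - 2*2)"
  have der: "DERIV g x :> g' x" if "0 < x" "x < 1" for x
    unfolding g_def g'_def using that
    by (auto intro!: derivative_eq_intros simp: field_simps)
  obtain \<xi> where xi: "q < \<xi>" "\<xi> < 1/2" "g (1/2) - g q = (1/2 - q) * g' \<xi>"
    using MVT2[of q "1/2" g g'] der qq assms by force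
  have "g' (1/2) < g' \<xi>" using gp_strict[of \<xi> "1/2" 2] xi assms unfolding g'_def by simp
  moreover have "g' (1/2) = 0" unfolding g'_def by simp
  ultimately have "(1/2 - q) * g' \<xi> > 0" using qq by simp
  moreover have "g (1/2) = 0" unfolding g_def by simp
  ultimately show ?thesis using xi by simp
qed

lemma binary_core:
  fixes p c q :: real
  assumes p: "0 < p" "p \<le> 1/2" and hc: "c*(1-2*p) = ln (1-p) - ln p"
  defines "g \<equiv> \<lambda>q. ln q - ln p - ln (1-q) + ln (1-p) - 2*c*(q-p)"
  assumes gneg: "\<And>q. 0 < q \<Longrightarrow> q \<le> p \<Longrightarrow> g q \<le> 0"
    and gpos: "\<And>q. p \<le> q \<Longrightarrow> q \<le> 1/2 \<Longrightarrow> g q \<ge> 0"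
    and q: "0 \<le> q" "q \<le> 1"
  shows "q*(ln q - ln p) + (1-q)*(ln (1-q) - ln (1-p)) - c*(q-p)^2 \<ge> 0"
proof -
  define f where "f = (\<lambda>q::real. q*(ln q - ln p) + (1-q)*(ln (1-q) - ln (1-p)) - c*(q-p)^2)"
  have der: "DERIV f x :> g x" if "0 < x" "x < 1" for x
  proof -
    have "DERIV f x :> ((ln x - ln p) + x*(1/x) + (-1)*(ln(1-x) - ln(1-p)) + (1-x)*(-1/(1-x)) - c*(2*(x-p)))"
      unfolding f_def using that by (auto intro!: derivative_eq_intros)
    moreover have "x*(1/x) = 1" "(1-x)*(-1/(1-x)) = -1" using that by auto
    ultimately show ?thesis unfolding g_def by (simp add: algebra_simps)
  qed
  have gsym: "g (1-x) = - g x" for x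
    unfolding g_def using hc by (simp add: algebra_simps)
  have cont: "continuous_on {0..1} f"
  proof -
    have c1: "continuous_on {0..1} (\<lambda>q::real. q * ln q)"
      using cont_xlnx by (rule continuous_on_subset) auto
    have c2: "continuous_on {0..1} (\<lambda>q::real. (1-q) * ln (1-q))"
    proof -
      have h1: "continuous_on {0..1} (\<lambda>q::real. 1-q)" by (intro continuous_intros)
      have h2: "(\<lambda>q::real. 1-q) ` {0..1} \<subseteq> {0..}" by auto
      show ?thesis using continuous_on_compose2[OF cont_xlnx h1 h2] by simp
    qed
    have "f = (\<lambda>q. q * ln q - q * ln p + (1-q) * ln (1-q) - (1-q)*ln (1-p) - c*(q-p)^2)"
      unfolding f_def by (auto simp: algebra_simps)
    then show ?thesis using c1 c2 by (auto intro!: continuous_intros)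
  qed
  have contI: "continuous_on {a..b} f" if "0 \<le> a" "b \<le> 1" for a b
    using cont by (rule continuous_on_subset) (use that in auto)
  have fp: "f p = 0" unfolding f_def by simp
  have f1p: "f (1-p) = 0"
  proof -
    have "f (1-p) = (1-2*p)*(ln (1-p) - ln p) - (c*(1-2*p))*(1-2*p)"
      unfolding f_def by (simp add: algebra_simps power2_eq_square)
    then show ?thesis using hc by simp
  qed
  have "f q \<ge> 0"
  proof (cases "q \<le> p")
    case True
    have "f q \<ge> f p"
    proof (rule DERIV_nonpos_imp_decreasing_open[OF True _ contI])
      fix x assume x: "q < x" "x < p"
      have "DERIV f x :> g x" using der[of x] x q p by simp
      moreover have "g x \<le> 0" using gneg[of x] x q by simp
      ultimately show "\<exists>y. DERIV f x :> y \<and> y \<le> 0" by blast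
    qed (use q p in auto)
    then show ?thesis using fp by simp
  next
    case F1: False
    show ?thesis
    proof (cases "q \<le> 1/2")
      case True
      have "f p \<le> f q"
      proof (rule DERIV_nonneg_imp_increasing_open[OF _ _ contI])
        fix x assume x: "p < x" "x < q"
        have "DERIV f x :> g x" using der[of x] x q p by simp
        moreover have "g x \<ge> 0" using gpos[of x] x True by simp
        ultimately show "\<exists>y. DERIV f x :> y \<and> y \<ge> 0" by blast
      qed (use F1 q p in auto)
      then show ?thesis using fp by simp
    next
      case F2: False
      show ?thesis
      proof (cases "q \<le> 1 - p")
        case True
        have "f q \<ge> f (1-p)"
        proof (rule DERIV_nonpos_imp_decreasing_open[OF True _ contI])
          fix x assume x: "q < x" "x < 1-p"
          have "g (1-x) \<ge> 0" using gpos[of "1-x"] x F2 by simp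
          then show "\<exists>y. DERIV f x :> y \<and> y \<le> 0" 
          proof -
            have "DERIV f x :> g x" using der[of x] x F2 p by simp
            then show ?thesis using gsym[of x] \<open>g (1-x) \<ge> 0\<close> by (intro exI[of _ "g x"]) simp
          qed
        qed (use q p F2 in auto)
        then show ?thesis using f1p by simp
      next
        case False
        have "f (1-p) \<le> f q"
        proof (rule DERIV_nonneg_imp_increasing_open[OF _ _ contI])
          fix x assume x: "1-p < x" "x < q"
          have "g (1-x) \<le> 0" using gneg[of "1-x"] x q by simp
          then show "\<exists>y. DERIV f x :> y \<and> y \<ge> 0" 
          proof -
            have "DERIV f x :> g x" using der[of x] x q p by simp
            then show ?thesis using gsym[of x] \<open>g (1-x) \<le> 0\<close> by (intro exI[of _ "g x"]) simp
          qed
        qed (use False q p in auto)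
        then show ?thesis using f1p by simp
      qed
    qed
  qed
  then show ?thesis unfolding f_def .
qed



lemma phi_psi: fixes t::real assumes "0 < t" "t < 1/2"
  shows "phi t = (((1-t)/t)+1)*ln ((1-t)/t)/(((1-t)/t)-1)"
proof -
  have "((1-t)/t)+1 = 1/t" "((1-t)/t)-1 = (1-2*t)/t" using assms by (auto simp: field_simps)
  then show ?thesis using assms unfolding phi_def by (simp add: field_simps)
qed

lemma phi_ge2: fixes t::real assumes "0 < t" "t \<le> 1/2" shows "phi t \<ge> 2"
proof (cases "t = 1/2")
  case True then show ?thesis unfolding phi_def by simp
next
  case False
  then have t: "t < 1/2" using assms by simp
  define x where "x = (1-t)/t"
  have x1: "x > 1" using assms t unfolding x_def by (simp add: field_simps)
  have "2*(x-1)/(x+1) \<le> ln x" using ln_lower[of x] x1 by simp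
  then have "2*(x-1) \<le> ln x * (x+1)" using x1 by (simp add: divide_simps)
  then have "2 \<le> (x+1)*ln x/(x-1)" using x1 by (simp add: divide_simps algebra_simps)
  then show ?thesis using phi_psi[OF assms(1) t] unfolding x_def by simp
qed

lemma phi_anti: fixes s t::real assumes "0 < s" "s \<le> t" "t \<le> 1/2" shows "phi t \<le> phi s"
proof (cases "t = 1/2")
  case True
  then show ?thesis using phi_ge2[of s] assms unfolding phi_def by simp
next
  case False
  then have t: "t < 1/2" using assms by simp
  have x1: "(1-t)/t > 1" using assms t by (simp add: field_simps)
  have xx: "(1-t)/t \<le> (1-s)/s" using assms by (simp add: field_simps)
  show ?thesis using psi_mono[OF x1 xx] phi_psi[of t] phi_psi[of s] assms t by simp
qed

lemma phi_sym: fixes p::real assumes "0 < p" "p < 1" shows "phi (1-p) = phi p"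
proof (cases "p = 1/2")
  case True
  then have "1 - p = p" by simp
  then show ?thesis by (simp only:)
next
  case False
  have "ln (p/(1-p)) = - ln ((1-p)/p)" using assms by (simp add: ln_divide_pos)
  moreover have "1 - 2*(1-p) = -(1-2*p)" by simp
  ultimately show ?thesis using False unfolding phi_def by (simp add: divide_simps) (simp add: algebra_simps)
qed

lemma xln_eq: fixes q p :: real assumes "p > 0" "q \<ge> 0"
  shows "q * ln (q/p) = q*(ln q - ln p)"
  using assms by (cases "q = 0") (auto simp: ln_divide_pos)

lemma binary_half:
  fixes p q :: real assumes p: "0 < p" "p \<le> 1/2" and q: "0 \<le> q" "q \<le> 1"
  shows "q * ln (q/p) + (1-q) * ln ((1-q)/(1-p)) \<ge> phi p * (q-p)^2"
proof -
  have core: "q*(ln q - ln p) + (1-q)*(ln (1-q) - ln (1-p)) - phi p*(q-p)^2 \<ge> 0"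
  proof (cases "p = 1/2")
    case True
    have gpos: "ln q' - ln p - ln (1-q') + ln (1-p) - 2*phi p*(q'-p) \<ge> 0"
      if "p \<le> q'" "q' \<le> 1/2" for q'
    proof -
      have "q' = p" using that True by simp
      then show ?thesis by simp
    qed
    show ?thesis
    proof (rule binary_core[OF p _ _ gpos q])
      have "1 - 2*p = 0" "1 - p = p" using True by simp_all
      then show "phi p * (1 - 2*p) = ln (1-p) - ln p" by simp
      fix q' :: real assume q': "0 < q'" "q' \<le> p"
      have e: "1 - p = p" "4*p = 2" "phi p = 2" using True unfolding phi_def by simp_all
      have "q' \<le> 1/2" using q' True by simp
      then have h: "ln q' - ln (1-q') \<le> 4*q' - 2" using g_sign_half[of q'] q' by simp
      have l: "ln (1-p) = ln p" using e by simp
      have m: "2*phi p*(q'-p) = 4*q' - 2" using e by (simp add: algebra_simps)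
      show "ln q' - ln p - ln (1-q') + ln (1-p) - 2*phi p*(q'-p) \<le> 0"
        using h l m by linarith
    qed
  next
    case False
    then have p2: "p < 1/2" using p by simp
    have c: "phi p = ln ((1-p)/p) / (1-2*p)" unfolding phi_def using False by simp
    show ?thesis
    proof (rule binary_core[OF p _ g_neg[OF p(1) p2 c] g_pos[OF p(1) p2 c] q])
      show "phi p * (1 - 2*p) = ln (1-p) - ln p" using c p2 p by (simp add: ln_divide_pos)
    qed
  qed
  have e1: "q * ln (q/p) = q*(ln q - ln p)" using xln_eq p q by simp
  have e2: "(1-q) * ln ((1-q)/(1-p)) = (1-q)*(ln (1-q) - ln (1-p))" using xln_eq[of "1-p" "1-q"] p q by simp
  show ?thesis unfolding e1 e2 using core by linarith
qed

lemma binary: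
  fixes p q :: real assumes p: "0 < p" "p < 1" and q: "0 \<le> q" "q \<le> 1"
  shows "q * ln (q/p) + (1-q) * ln ((1-q)/(1-p)) \<ge> phi p * (q-p)^2"
proof (cases "p \<le> 1/2")
  case True then show ?thesis using binary_half p q by simp
next
  case False
  have "(1-q) * ln ((1-q)/(1-p)) + (1-(1-q)) * ln ((1-(1-q))/(1-(1-p))) \<ge> phi (1-p) * ((1-q)-(1-p))^2"
    using binary_half[of "1-p" "1-q"] False p q by simp
  moreover have "((1-q)-(1-p))^2 = (q-p)^2" by (simp add: power2_commute)
  ultimately show ?thesis using phi_sym[OF p] by simp
qed



lemma term_ineq:
  fixes r p a b :: real assumes "r \<ge> 0" "p > 0" "a > 0" "b > 0"
  shows "r * ln (r/p) \<ge> r * ln (a/b) + r - p*a/b"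
proof (cases "r = 0")
  case True then show ?thesis using assms by simp
next
  case False
  then have r: "r > 0" using assms by simp
  have "ln (p*a/(r*b)) \<le> p*a/(r*b) - 1" using ln_le_minus_one[of "p*a/(r*b)"] r assms by simp
  moreover have "ln (p*a/(r*b)) = ln p + ln a - ln r - ln b"
    using r assms by (simp add: ln_div ln_mult)
  ultimately have h: "ln p + ln a - ln r - ln b \<le> p*a/(r*b) - 1" by simp
  have "r * (ln p + ln a - ln r - ln b) \<le> r * (p*a/(r*b) - 1)"
    using mult_left_mono[OF h] r by simp
  moreover have "r * (p*a/(r*b) - 1) = p*a/b - r" using r assms by (simp add: field_simps)
  moreover have "r * ln (r/p) = r * (ln r - ln p)" "r * ln (a/b) = r * (ln a - ln b)"
    using r assms by (simp_all add: ln_div)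
  ultimately show ?thesis by (simp add: algebra_simps)
qed

lemma logsum:
  fixes R P :: "'a \<Rightarrow> real"
  assumes "finite S" "S \<noteq> {}" "\<forall>x\<in>S. P x > 0" "\<forall>x\<in>S. R x \<ge> 0"
  shows "(\<Sum>x\<in>S. R x * ln (R x / P x)) \<ge> (\<Sum>x\<in>S. R x) * ln ((\<Sum>x\<in>S. R x) / (\<Sum>x\<in>S. P x))"
proof -
  define a where "a = (\<Sum>x\<in>S. R x)"
  define b where "b = (\<Sum>x\<in>S. P x)"
  have b: "b > 0" unfolding b_def using assms by (intro sum_pos) auto
  have a0: "a \<ge> 0" unfolding a_def using assms by (intro sum_nonneg) auto
  show ?thesis
  proof (cases "a = 0")
    case True
    then have "\<forall>x\<in>S. R x = 0" unfolding a_def using assms sum_nonneg_eq_0_iff by blast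
    then show ?thesis using True unfolding a_def by simp
  next
    case False
    then have a: "a > 0" using a0 by simp
    have "(\<Sum>x\<in>S. R x * ln (R x / P x)) \<ge> (\<Sum>x\<in>S. R x * ln (a/b) + R x - P x * a / b)"
      using term_ineq a b assms by (intro sum_mono) auto
    moreover have "(\<Sum>x\<in>S. R x * ln (a/b) + R x - P x * a / b) = a * ln (a/b) + a - b * a / b"
      unfolding a_def b_def by (simp add: sum.distrib sum_subtractf sum_distrib_right sum_divide_distrib)
    moreover have "b * a / b = a" using b by simp
    ultimately show ?thesis unfolding a_def b_def by simp
  qed
qed

lemma sum_split_compl:
  fixes f :: "'a::finite \<Rightarrow> real"
  shows "(\<Sum>x\<in>UNIV. f x) = (\<Sum>x\<in>A. f x) + (\<Sum>x\<in>-A. f x)"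
  by (metis Compl_eq_Diff_UNIV add.commute finite sum.subset_diff subset_UNIV)



theorem lemma2:
  fixes P R :: "'a::finite \<Rightarrow> real"
  assumes "is_pmf P" and "\<forall>x. P x > 0"
    and "is_pmf R" and "R \<noteq> P"
  defines "J \<equiv> (\<lambda>x. R x - P x)"
    and "K \<equiv> (\<lambda>x. (R x - P x) / sqrt (P x))"
  shows "KL_div R P / ((\<Sum>x\<in>UNIV. (K x)\<^sup>2) * (\<Sum>x\<in>UNIV. \<bar>J x\<bar>))
         \<ge> phi (Max ((\<lambda>A. min (prob_set P A) (1 - prob_set P A)) ` (UNIV :: 'a set set)))
           / (4 * Max ((\<lambda>x. \<bar>J x / P x\<bar>) ` (UNIV :: 'a set)))"
proof -
  have Ppos: "\<And>x. P x > 0" using assms(2) by simp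
  have Rnn: "\<And>x. R x \<ge> 0" using assms(3) unfolding is_pmf_def by simp
  have sP: "(\<Sum>x\<in>UNIV. P x) = 1" using assms(1) unfolding is_pmf_def by simp
  have sR: "(\<Sum>x\<in>UNIV. R x) = 1" using assms(3) unfolding is_pmf_def by simp
  define A where "A = {x. P x \<le> R x}"
  have Ane: "A \<noteq> {}"
  proof
    assume "A = {}"
    then have "\<forall>x. R x < P x" unfolding A_def by (auto simp: not_le)
    then have "(\<Sum>x\<in>UNIV. R x) < (\<Sum>x\<in>UNIV. P x)" by (intro sum_strict_mono) auto
    then show False using sP sR by simp
  qed
  have Bne: "-A \<noteq> {}"
  proof
    assume "-A = {}"
    then have ge: "\<forall>x. P x \<le> R x" unfolding A_def by auto
    have "(\<Sum>x\<in>UNIV. R x - P x) = 0" using sP sR by (simp add: sum_subtractf)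
    then have "\<forall>x\<in>UNIV. R x - P x = 0" using ge by (subst sum_nonneg_eq_0_iff[symmetric]) auto
    then have "R = P" by auto
    then show False using assms(4) by simp
  qed
  define a where "a = (\<Sum>x\<in>A. R x)"
  define b where "b = (\<Sum>x\<in>A. P x)"
  define a' where "a' = (\<Sum>x\<in>-A. R x)"
  define b' where "b' = (\<Sum>x\<in>-A. P x)"
  have aa: "a + a' = 1" using sR sum_split_compl[of R A] unfolding a_def a'_def by simp
  have bb: "b + b' = 1" using sP sum_split_compl[of P A] unfolding b_def b'_def by simp
  have b0: "b > 0" unfolding b_def using Ane Ppos by (intro sum_pos) auto
  have b'0: "b' > 0" unfolding b'_def using Bne Ppos by (intro sum_pos) auto
  have a'0: "a' \<ge> 0" unfolding a'_def using Rnn by (intro sum_nonneg) auto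
  have a0: "a \<ge> 0" unfolding a_def using Rnn by (intro sum_nonneg) auto
  have KL: "KL_div R P = (\<Sum>x\<in>UNIV. R x * ln (R x / P x))"
    unfolding KL_div_def by (intro sum.cong) auto
  have l1: "(\<Sum>x\<in>A. R x * ln (R x / P x)) \<ge> a * ln (a / b)"
    unfolding a_def b_def using Ane Ppos Rnn by (intro logsum) auto
  have l2: "(\<Sum>x\<in>-A. R x * ln (R x / P x)) \<ge> a' * ln (a' / b')"
    unfolding a'_def b'_def using Bne Ppos Rnn by (intro logsum) auto
  have bin: "a * ln (a/b) + (1-a) * ln ((1-a)/(1-b)) \<ge> phi b * (a-b)^2"
    using binary[of b a] b0 b'0 bb aa a0 a'0 by simp
  have KLge: "KL_div R P \<ge> phi b * (a-b)^2"
  proof -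
    have "KL_div R P = (\<Sum>x\<in>A. R x * ln (R x / P x)) + (\<Sum>x\<in>-A. R x * ln (R x / P x))"
      unfolding KL by (rule sum_split_compl)
    moreover have "a' = 1 - a" "b' = 1 - b" using aa bb by simp_all
    ultimately show ?thesis using l1 l2 bin by simp
  qed
  define N where "N = (\<Sum>x\<in>UNIV. \<bar>J x\<bar>)"
  have N: "N = 2*(a-b)"
  proof -
    have "N = (\<Sum>x\<in>A. \<bar>J x\<bar>) + (\<Sum>x\<in>-A. \<bar>J x\<bar>)" unfolding N_def by (rule sum_split_compl)
    also have "(\<Sum>x\<in>A. \<bar>J x\<bar>) = (\<Sum>x\<in>A. R x - P x)"
      unfolding J_def A_def by (intro sum.cong) auto
    also have "(\<Sum>x\<in>-A. \<bar>J x\<bar>) = (\<Sum>x\<in>-A. P x - R x)"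
      unfolding J_def A_def by (intro sum.cong) auto
    finally have "N = (a - b) + (b' - a')"
      unfolding a_def b_def a'_def b'_def by (simp add: sum_subtractf)
    then show ?thesis using aa bb by simp
  qed
  define \<pi> where "\<pi> = Max ((\<lambda>A. min (prob_set P A) (1 - prob_set P A)) ` (UNIV :: 'a set set))"
  have finS: "finite (UNIV :: 'a set set)" by simp
  have pi_ge: "min b (1-b) \<le> \<pi>"
  proof -
    have "prob_set P A = b" unfolding prob_set_def b_def by simp
    then show ?thesis unfolding \<pi>_def using finS by (intro Max_ge) force+
  qed
  have pi_le: "\<pi> \<le> 1/2"
  proof -
    have "\<pi> \<in> (\<lambda>A. min (prob_set P A) (1 - prob_set P A)) ` (UNIV :: 'a set set)"
      unfolding \<pi>_def using finS by (intro Max_in) auto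
    then obtain A0 where "\<pi> = min (prob_set P A0) (1 - prob_set P A0)" by auto
    then show ?thesis by linarith
  qed
  have m0: "min b (1-b) > 0" using b0 b'0 bb by simp
  have phib: "phi (min b (1-b)) = phi b"
    using phi_sym[of b] b0 b'0 bb by (cases "b \<le> 1 - b") (simp_all add: min_def)
  have phipi: "phi \<pi> \<le> phi b" using phi_anti[OF m0 pi_ge pi_le] phib by simp
  have phi2: "phi \<pi> \<ge> 2" using phi_ge2[of \<pi>] m0 pi_ge pi_le by simp
  have KL2: "KL_div R P \<ge> phi \<pi> * N^2 / 4"
  proof -
    have h: "phi \<pi> * (a-b)^2 \<le> phi b * (a-b)^2" using phipi by (intro mult_right_mono) auto
    have n2: "N^2 = 4*(a-b)^2" unfolding N by (simp add: power2_eq_square algebra_simps)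
    have e: "phi \<pi> * N^2 / 4 = phi \<pi> * (a-b)^2" by (simp add: n2)
    show ?thesis using e h KLge by linarith
  qed
  define S where "S = (\<Sum>x\<in>UNIV. (K x)\<^sup>2)"
  define M where "M = Max ((\<lambda>x. \<bar>J x / P x\<bar>) ` (UNIV :: 'a set))"
  have Mge: "\<bar>J x / P x\<bar> \<le> M" for x unfolding M_def by (intro Max_ge) auto
  have M0: "M \<ge> 0" using Mge[of undefined] by linarith
  have Kx: "(K x)\<^sup>2 = \<bar>J x / P x\<bar> * \<bar>J x\<bar>" for x
  proof -
    have "(sqrt (P x))^2 = P x" using Ppos[of x] by simp
    then show ?thesis unfolding K_def J_def using Ppos[of x]
      by (simp add: power_divide abs_mult_self power2_eq_square abs_divide)
  qed
  have SM: "S \<le> M * N"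
  proof -
    have "S \<le> (\<Sum>x\<in>UNIV. M * \<bar>J x\<bar>)"
      unfolding S_def Kx using Mge by (intro sum_mono mult_right_mono) auto
    then show ?thesis unfolding N_def by (simp add: sum_distrib_left)
  qed
  have S0: "S > 0"
  proof -
    obtain x where "R x \<noteq> P x" using assms(4) by auto
    then have "(K x)\<^sup>2 > 0" unfolding K_def using Ppos[of x] by simp
    then show ?thesis unfolding S_def by (intro sum_pos2[where i=x]) auto
  qed
  have N0: "N > 0" using SM S0 M0 N
    by (smt (verit) mult_nonneg_nonpos)
  have Mpos: "M > 0" using SM S0 N0 M0 by (smt (verit) mult_nonneg_nonneg mult_eq_0_iff)
  have goal: "phi \<pi> / (4 * M) \<le> KL_div R P / (S * N)"
  proof -
    have "phi \<pi> * (S * N) \<le> phi \<pi> * (M * N * N)"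
      using SM N0 phi2 by (intro mult_left_mono) (auto intro: mult_right_mono)
    also have "\<dots> = 4 * M * (phi \<pi> * N^2 / 4)" by (simp add: power2_eq_square)
    also have "\<dots> \<le> 4 * M * KL_div R P" using KL2 Mpos by (intro mult_left_mono) auto
    finally have "phi \<pi> * (S * N) \<le> KL_div R P * (4 * M)" by (simp add: mult.commute)
    then show ?thesis using Mpos S0 N0 by (simp add: divide_le_eq le_divide_eq mult.commute mult.left_commute)
  qed
  then show ?thesis unfolding S_def N_def M_def \<pi>_def .
qed


end
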